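(* Let $m,n\in\mathbb{N}$ with $n\le m\le 2n$. Let $L>0$, $C>1$, $\Gamma\subseteq\mathbb{Z}_n$, $r=20C(\log(|\Gamma|/2)+1)$, and $\tau<\frac{L}{20}\cdot\frac{1}{3+2\log(n)}$. Let $f:\mathbb{Z}_n\to\mathbb{C}$ and suppose that $|\alpha-\alpha'|_n>r$ for all distinct $\alpha,\alpha'\in\Gamma$, that $L\le|\widehat f(\alpha)|\le CL$ for all $\alpha\in\Gamma$, and that $|\widehat f(\alpha)|\le\tau$ for all $\alpha\notin\Gamma$. Then $|\widehat{\widetilde f}(\lfloor\frac mn\alpha\rceil)|\ge\frac15L$ for all $\alpha\in\Gamma$.
   Context: $\mathbb{Z}_n=\{0,\dots,n-1\}$ with addition mod $n$; elements are treated as these integer representatives. For $h:\mathbb{Z}_n\to\mathbb{C}$, $\widehat h(\alpha)=\frac1n\sum_{x\in\mathbb{Z}_n}h(x)\exp(-2\pi i\alpha x/n)$ (analogously on $\mathbb{Z}_m$). $\widetilde f:\mathbb{Z}_m\to\mathbb{C}$ is $\widetilde f(x)=f(x)$ for $0\le x<\min(n,m)$ and $0$ otherwise. $\lfloor x\rceil$ is the integer nearest to $x$, taken in $\mathbb{Z}_m$. For $k\in\mathbb{N}$, $x\in\mathbb{R}$: $|x|_k=\min\{|x-kz|:z\in\mathbb{Z}\}$. $\log$ is the natural logarithm. *)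

theory Defs
  imports Complex_Main
begin

text \<open>Elements of Z_n are represented by naturals in {0..<n}; functions Z_n -> C by
  nat => complex, only values on {0..<n} being relevant.\<close>

definition dft :: "nat \<Rightarrow> (nat \<Rightarrow> complex) \<Rightarrow> nat \<Rightarrow> complex" where
  "dft n h \<alpha> = (1 / of_nat n) *
     (\<Sum>x<n. h x * exp (- 2 * pi * \<i> * of_nat \<alpha> * of_nat x / of_nat n))"

definition ext_fun :: "nat \<Rightarrow> nat \<Rightarrow> (nat \<Rightarrow> complex) \<Rightarrow> nat \<Rightarrow> complex" where
  "ext_fun n m f x = (if x < min n m then f x else 0)"

definition circ_abs :: "nat \<Rightarrow> real \<Rightarrow> real" where
  "circ_abs k x = Inf {\<bar>x - real k * of_int z\<bar> | z. True}"

definition round_mod :: "nat \<Rightarrow> real \<Rightarrow> nat" where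
  "round_mod m x = nat (round x mod int m)"

end

theory Submission
  imports Defs "HOL-Analysis.Analysis"
begin

lemma cmod_cis_minus1: "cmod (cis a - 1) = 2 * \<bar>sin (a/2)\<bar>"
proof -
  have "(cmod (cis a - 1))^2 = (cos a - 1)^2 + (sin a)^2"
    by (simp add: cmod_power2)
  also have "\<dots> = 2 - 2 * cos a" using sin_cos_squared_add[of a] by (simp add: power2_eq_square algebra_simps)
  also have "\<dots> = (2 * \<bar>sin (a/2)\<bar>)^2" using cos_double_sin[of "a/2"] by (simp add: power2_eq_square)
  finally have "(cmod (cis a - 1))^2 = (2 * \<bar>sin (a/2)\<bar>)^2" .
  thus ?thesis by (rule power2_eq_imp_eq) auto
qed

lemma geom_sum:
  fixes \<theta> :: real
  shows "cmod (\<Sum>x<N. cis (2*pi*\<theta>*real x)) * \<bar>sin (pi*\<theta>)\<bar> = \<bar>sin (pi * real N * \<theta>)\<bar>"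
proof -
  have e: "cis (2*pi*\<theta>*real x) = cis (2*pi*\<theta>) ^ x" for x
    using Complex.DeMoivre[of "2*pi*\<theta>" x] by (simp add: mult_ac)
  have "(cis (2*pi*\<theta>) - 1) * (\<Sum>x<N. cis (2*pi*\<theta>*real x)) = cis (2*pi*\<theta>) ^ N - 1"
    unfolding e by (simp add: power_diff_1_eq)
  hence "cmod (cis (2*pi*\<theta>) - 1) * cmod (\<Sum>x<N. cis (2*pi*\<theta>*real x)) = cmod (cis (2*pi*\<theta>) ^ N - 1)"
    by (simp only: norm_mult[symmetric])
  also have "cis (2*pi*\<theta>) ^ N = cis (2*pi*\<theta>*real N)" using Complex.DeMoivre[of "2*pi*\<theta>" N] by (simp add: mult_ac)
  finally have "2 * \<bar>sin (pi*\<theta>)\<bar> * cmod (\<Sum>x<N. cis (2*pi*\<theta>*real x)) = 2 * \<bar>sin (pi*\<theta>*real N)\<bar>"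
    unfolding cmod_cis_minus1 by (simp add: mult.assoc)
  hence "cmod (\<Sum>x<N. cis (2*pi*\<theta>*real x)) * \<bar>sin (pi*\<theta>)\<bar> = \<bar>sin (pi*\<theta>*real N)\<bar>"
    by (simp add: mult.commute)
  moreover have "pi*\<theta>*real N = pi * real N * \<theta>" by simp
  ultimately show ?thesis by metis
qed

lemma sin_cubic: fixes t :: real assumes "t \<ge> 0" shows "sin t \<ge> t - t^3/6"
proof -
  have "\<bar>sin t - (\<Sum>m<3. sin_coeff m * t ^ m)\<bar> \<le> inverse (fact 3) * \<bar>t\<bar> ^ 3"
    by (rule Maclaurin_sin_bound)
  moreover have "(\<Sum>m<3. sin_coeff m * t ^ m) = t"
    by (simp add: eval_nat_numeral sin_coeff_def)
  moreover have "inverse (fact 3 :: real) = 1/6" by (simp add: eval_nat_numeral)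
  moreover have "\<bar>t\<bar> = t" using assms by simp
  ultimately have "\<bar>sin t - t\<bar> \<le> t^3/6" by (simp only:)
  thus ?thesis by linarith
qed

lemma cos_quad: fixes y :: real shows "cos y \<ge> 1 - y^2/2"
proof -
  have "cos y = cos (2*(y/2))" by simp
  also have "\<dots> = 1 - 2 * sin (y/2) ^ 2" by (rule cos_double_sin)
  finally have c: "cos y = 1 - 2 * sin (y/2) ^ 2" .
  have "sin (y/2) ^ 2 \<le> (y/2)^2"
    using abs_sin_x_le_abs_x[of "y/2"] by (metis abs_le_square_iff)
  thus ?thesis using c by (simp add: power2_eq_square)
qed

lemma jordan0: fixes x :: real assumes "0 \<le> x" "x \<le> pi/2" shows "2*x/pi \<le> sin x"
proof (cases "x \<le> 7/5")
  case True
  have p: "pi > 3" by (rule pi_gt3)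
  have "x - x^3/6 \<ge> 2*x/pi"
  proof -
    have "x^2 \<le> 49/25" using True assms(1) mult_mono[of x "7/5" x "7/5"] by (simp add: power2_eq_square)
    moreover have "2/pi \<le> 2/3" using p by (simp add: field_simps)
    ultimately have "1 - x^2/6 \<ge> 2/pi" by linarith
    hence "x * (1 - x^2/6) \<ge> x * (2/pi)" using assms(1) by (rule mult_left_mono)
    thus ?thesis by (simp add: algebra_simps power3_eq_cube power2_eq_square)
  qed
  thus ?thesis using sin_cubic[OF assms(1)] by linarith
next
  case False
  define y where "y = pi/2 - x"
  have y0: "0 \<le> y" "y \<le> 1" using assms False pi_approx unfolding y_def by auto
  have "sin x = cos y" unfolding y_def by (simp add: cos_diff)
  have "y^2/2 \<le> 2*y/pi"
  proof -
    have "y * y \<le> y * 1" using y0 by (intro mult_left_mono) auto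
    moreover have "pi * y \<le> 4 * y" using y0 pi_less_4 by (intro mult_right_mono) auto
    hence "y \<le> 4*y/pi" by (simp add: field_simps)
    ultimately show ?thesis by (simp add: power2_eq_square)
  qed
  hence "2*x/pi \<le> 1 - y^2/2" unfolding y_def by (simp add: field_simps)
  thus ?thesis using cos_quad[of y] \<open>sin x = cos y\<close> by linarith
qed

lemma jordan: fixes u :: real assumes "0 \<le> u" "u \<le> 1" shows "2 * min u (1 - u) \<le> abs (sin (pi * u))"
proof (cases "u \<le> 1/2")
  case True
  thus ?thesis using jordan0[of "pi*u"] assms by (auto simp: min_def)
next
  case False
  have "sin (pi*u) = sin (pi*(1-u))" by (simp add: algebra_simps sin_diff)
  thus ?thesis using jordan0[of "pi*(1-u)"] assms False by (auto simp: min_def)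
qed

definition HH :: "nat \<Rightarrow> real" where "HH N = (\<Sum>j\<in>{1..N}. 1 / real j)"

lemma HH_Suc: "HH (Suc N) = HH N + 1 / real (Suc N)"
  unfolding HH_def by simp

lemma HH_nonneg: "HH N \<ge> 0" unfolding HH_def by (auto intro: sum_nonneg)

lemma HH_mono: "M \<le> N \<Longrightarrow> HH M \<le> HH N"
  unfolding HH_def by (intro sum_mono2) auto

lemma HH_le: "N \<ge> 1 \<Longrightarrow> HH N \<le> 1 + ln (real N)"
proof (induction N rule: dec_induct)
  case base
  then show ?case by (simp add: HH_def)
next
  case (step N)
  have N0: "real N > 0" using step by simp
  have "ln (real N / real (Suc N)) \<le> real N / real (Suc N) - 1"
    by (rule ln_le_minus_one) (use N0 in simp)
  also have "\<dots> = - 1 / real (Suc N)" by (simp add: field_simps)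
  finally have "ln (real N) - ln (real (Suc N)) \<le> - 1 / real (Suc N)"
    using N0 by (simp add: ln_div)
  thus ?case using step.IH HH_Suc[of N] by linarith
qed

lemma sep_sum_aux:
  fixes r :: real
  assumes "r > 0"
  shows "\<forall>S. finite S \<longrightarrow> card S = n \<longrightarrow> (\<forall>s\<in>S. s > r) \<longrightarrow>
     (\<forall>s\<in>S. \<forall>s'\<in>S. s \<noteq> s' \<longrightarrow> \<bar>s - s'\<bar> > r) \<longrightarrow>
     ((S \<noteq> {} \<longrightarrow> Max S \<ge> real n * r) \<and> (\<Sum>s\<in>S. 1 / s) \<le> HH n / r)"
proof (induction n)
  case 0
  then show ?case by (simp add: HH_def)
next
  case (Suc n)
  show ?case
  proof (intro allI impI)
    fix S :: "real set"
    assume fin: "finite S" and c: "card S = Suc n" and big: "\<forall>s\<in>S. s > r"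
      and sep: "\<forall>s\<in>S. \<forall>s'\<in>S. s \<noteq> s' \<longrightarrow> \<bar>s - s'\<bar> > r"
    have ne: "S \<noteq> {}" using c by auto
    define M where "M = Max S"
    have MS: "M \<in> S" using fin ne unfolding M_def by simp
    define S' where "S' = S - {M}"
    have fin': "finite S'" "card S' = n" using fin c MS unfolding S'_def by auto
    have IH: "(S' \<noteq> {} \<longrightarrow> Max S' \<ge> real n * r) \<and> (\<Sum>s\<in>S'. 1 / s) \<le> HH n / r"
      using Suc.IH fin' big sep unfolding S'_def by auto
    have Mge: "M \<ge> real (Suc n) * r"
    proof (cases "S' = {}")
      case True
      hence "n = 0" using fin' by simp
      thus ?thesis using big MS by (simp add: less_imp_le)
    next
      case False
      have "Max S' \<in> S'" using False fin' by simp
      hence m1: "Max S' \<in> S" "Max S' \<noteq> M" unfolding S'_def by auto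
      have "Max S' \<le> M" using m1 fin unfolding M_def by simp
      moreover have "\<bar>M - Max S'\<bar> > r" using sep MS m1 by auto
      ultimately show ?thesis using IH False by (simp add: algebra_simps)
    qed
    have "(\<Sum>s\<in>S. 1 / s) = 1 / M + (\<Sum>s\<in>S'. 1 / s)"
      using fin MS unfolding S'_def by (simp add: sum.remove)
    also have "\<dots> \<le> 1 / (real (Suc n) * r) + HH n / r"
    proof -
      have "1 / M \<le> 1 / (real (Suc n) * r)"
        using Mge assms big MS by (intro divide_left_mono) (auto intro!: mult_pos_pos)
      thus ?thesis using IH by linarith
    qed
    also have "\<dots> = HH (Suc n) / r" by (simp add: HH_Suc add_divide_distrib)
    finally show "(S \<noteq> {} \<longrightarrow> Max S \<ge> real (Suc n) * r) \<and> (\<Sum>s\<in>S. 1 / s) \<le> HH (Suc n) / r"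
      using Mge unfolding M_def by simp
  qed
qed

lemma sep_sum:
  fixes r :: real and S :: "real set"
  assumes "r > 0" "finite S" "\<forall>s\<in>S. s > r" "\<forall>s\<in>S. \<forall>s'\<in>S. s \<noteq> s' \<longrightarrow> \<bar>s - s'\<bar> > r"
  shows "(\<Sum>s\<in>S. 1 / s) \<le> HH (card S) / r"
  using sep_sum_aux[OF assms(1), of "card S"] assms by blast

lemma exp_cis: "exp (complex_of_real (- 2 * pi) * \<i> * of_nat a * of_nat b / of_nat c) = cis (- 2*pi*real a*real b/real c)"
  unfolding cis_conv_exp by (simp add: mult_ac)

lemma orth:
  assumes "x < n" "y < n"
  shows "(\<Sum>\<beta><n. cis (2*pi*((real x - real y)/real n)*real \<beta>)) = (if x = y then of_nat n else 0)"
proof (cases "x = y")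
  case True then show ?thesis by simp
next
  case False
  define \<theta> where "\<theta> = (real x - real y)/real n"
  have n0: "real n > 0" using assms by simp
  have "sin (pi * real n * \<theta>) = 0"
    unfolding \<theta>_def using n0 sin_zero_iff_int2[of "pi * (real x - real y)"]
    by (auto intro!: exI[of _ "int x - int y"])
  moreover have "sin (pi * \<theta>) \<noteq> 0"
  proof
    assume "sin (pi * \<theta>) = 0"
    then obtain i :: int where i: "pi * \<theta> = of_int i * pi" by (auto simp: sin_zero_iff_int2)
    hence "\<theta> = of_int i" by simp
    hence "real x - real y = of_int i * real n" unfolding \<theta>_def using n0 by (simp add: field_simps)
    hence "int x - int y = i * int n" by (metis of_int_eq_iff of_int_mult of_int_diff of_int_of_nat_eq)
    moreover have "\<bar>int x - int y\<bar> < int n" using assms by auto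
    ultimately have "i = 0"
    proof (cases "i = 0")
      case False
      hence "\<bar>i\<bar> * int n \<ge> 1 * int n" by (intro mult_right_mono) auto
      thus ?thesis using \<open>\<bar>int x - int y\<bar> < int n\<close> \<open>int x - int y = i * int n\<close> by (simp add: abs_mult)
    qed
    thus False using False \<open>int x - int y = i * int n\<close> by simp
  qed
  ultimately have "cmod (\<Sum>\<beta><n. cis (2*pi*\<theta>*real \<beta>)) = 0"
    using geom_sum[of \<theta> n] by (auto simp: mult_ac)
  thus ?thesis using False unfolding \<theta>_def by simp
qed

lemma inversion:
  assumes "x < n"
  shows "(\<Sum>\<beta><n. dft n f \<beta> * cis (2*pi*real \<beta>*real x/real n)) = f x"
proof -
  have n0: "real n > 0" using assms by simp
  have "(\<Sum>\<beta><n. dft n f \<beta> * cis (2*pi*real \<beta>*real x/real n))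
     = (\<Sum>\<beta><n. (1/of_nat n) * (\<Sum>y<n. f y * cis (2*pi*((real x - real y)/real n)*real \<beta>)))"
  proof (rule sum.cong[OF refl])
    fix \<beta> assume "\<beta> \<in> {..<n}"
    have "dft n f \<beta> * cis (2*pi*real \<beta>*real x/real n)
       = (1/of_nat n) * (\<Sum>y<n. f y * (cis (- 2*pi*real \<beta>*real y/real n) * cis (2*pi*real \<beta>*real x/real n)))"
      unfolding dft_def exp_cis by (simp add: sum_distrib_left sum_distrib_right mult_ac)
    also have "\<dots> = (1/of_nat n) * (\<Sum>y<n. f y * cis (2*pi*((real x - real y)/real n)*real \<beta>))"
      by (simp add: cis_mult field_simps)
    finally show "dft n f \<beta> * cis (2*pi*real \<beta>*real x/real n) = (1/of_nat n) * (\<Sum>y<n. f y * cis (2*pi*((real x - real y)/real n)*real \<beta>))" .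
  qed
  also have "\<dots> = (1/of_nat n) * (\<Sum>\<beta><n. \<Sum>y<n. f y * cis (2*pi*((real x - real y)/real n)*real \<beta>))"
    by (simp only: sum_distrib_left)
  also have "\<dots> = (1/of_nat n) * (\<Sum>y<n. \<Sum>\<beta><n. f y * cis (2*pi*((real x - real y)/real n)*real \<beta>))"
    by (subst sum.swap) (rule refl)
  also have "\<dots> = (1/of_nat n) * (\<Sum>y<n. f y * (\<Sum>\<beta><n. cis (2*pi*((real x - real y)/real n)*real \<beta>)))"
    by (simp only: sum_distrib_left)
  also have "\<dots> = (1/of_nat n) * (\<Sum>y<n. f y * (if x = y then of_nat n else 0))"
    using orth[OF assms] by simp
  also have "(\<Sum>y<n. f y * (if x = y then of_nat n else 0)) = (\<Sum>y<n. if y = x then f y * of_nat n else 0)"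
    by (rule sum.cong) auto
  also have "\<dots> = f x * of_nat n" using assms by (simp add: sum.delta)
  also have "(1/of_nat n) * (f x * of_nat n) = f x" using n0 by simp
  finally show ?thesis .
qed

lemma dft_ext_expand:
  assumes "0 < n" "n \<le> m"
  shows "dft m (ext_fun n m f) \<gamma> = (\<Sum>\<beta><n. dft n f \<beta> * ((1/of_nat m) * (\<Sum>x<n. cis (2*pi*(real \<beta>/real n - real \<gamma>/real m)*real x))))"
proof -
  have "dft m (ext_fun n m f) \<gamma> = (1/of_nat m) * (\<Sum>x<m. ext_fun n m f x * cis (- 2*pi*real \<gamma>*real x/real m))"
    unfolding dft_def exp_cis ..
  also have "(\<Sum>x<m. ext_fun n m f x * cis (- 2*pi*real \<gamma>*real x/real m)) = (\<Sum>x<n. f x * cis (- 2*pi*real \<gamma>*real x/real m))"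
    by (rule sum.mono_neutral_cong_right) (use assms in \<open>auto simp: ext_fun_def\<close>)
  also have "\<dots> = (\<Sum>x<n. (\<Sum>\<beta><n. dft n f \<beta> * cis (2*pi*real \<beta>*real x/real n)) * cis (- 2*pi*real \<gamma>*real x/real m))"
    using inversion by simp
  also have "\<dots> = (\<Sum>x<n. \<Sum>\<beta><n. dft n f \<beta> * cis (2*pi*(real \<beta>/real n - real \<gamma>/real m)*real x))"
  proof -
    have e: "cis (2*pi*real \<beta>*real x/real n) * cis (- 2*pi*real \<gamma>*real x/real m) = cis (2*pi*(real \<beta>/real n - real \<gamma>/real m)*real x)" for x \<beta>
      unfolding cis_mult by (rule arg_cong[where f=cis]) (simp add: algebra_simps)
    show ?thesis unfolding sum_distrib_right by (intro sum.cong refl) (metis mult.assoc e)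
  qed
  also have "\<dots> = (\<Sum>\<beta><n. \<Sum>x<n. dft n f \<beta> * cis (2*pi*(real \<beta>/real n - real \<gamma>/real m)*real x))"
    by (rule sum.swap)
  finally show ?thesis
    by (simp add: sum_distrib_left mult_ac)
qed

definition Kf :: "nat \<Rightarrow> nat \<Rightarrow> real \<Rightarrow> complex" where
  "Kf m n \<theta> = (1/of_nat m) * (\<Sum>x<n. cis (2*pi*\<theta>*real x))"

lemma K_geom: "m > 0 \<Longrightarrow> cmod (Kf m n \<theta>) * real m * \<bar>sin (pi*\<theta>)\<bar> = \<bar>sin (pi * real n * \<theta>)\<bar>"
  unfolding Kf_def using geom_sum[of \<theta> n] by (simp add: norm_mult norm_divide)

lemma K_shift: "Kf m n (\<theta> + of_int J) = Kf m n \<theta>"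
proof -
  have "cis (2*pi*(\<theta> + of_int J)*real x) = cis (2*pi*\<theta>*real x)" for x
  proof -
    have "cis (2*pi*(\<theta> + of_int J)*real x) = cis (2*pi*\<theta>*real x) * cis (2*pi*(of_int (J * int x)))"
      by (simp add: cis_mult algebra_simps)
    also have "cis (2*pi*(of_int (J * int x))) = 1" by (rule cis_multiple_2pi) simp
    finally show ?thesis by simp
  qed
  thus ?thesis unfolding Kf_def by simp
qed

lemma K_main:
  assumes "0 < n" "n \<le> m" "m \<le> 2*n" "\<bar>\<delta>\<bar> \<le> 1/(2*real m)"
  shows "cmod (Kf m n \<delta>) \<ge> 11/25"
proof -
  define u where "u = real n / real m"
  have m0: "real m > 0" using assms by simp
  have u1: "u \<ge> 1/2" "u \<le> 1" using assms m0 unfolding u_def by (auto simp: field_simps)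
  show ?thesis
  proof (cases "\<delta> = 0")
    case True
    have "Kf m n \<delta> = of_real u" unfolding Kf_def True u_def by simp
    thus ?thesis using u1 by simp
  next
    case False
    define t where "t = pi * real n * \<bar>\<delta>\<bar>"
    have t0: "t > 0" unfolding t_def using False assms by simp
    have "t \<le> pi * real n * (1/(2*real m))" unfolding t_def using assms(4) by (intro mult_left_mono) auto
    hence tle: "t \<le> pi * u / 2" unfolding u_def by simp
    moreover have "pi * u \<le> pi * 1" using u1 by (intro mult_left_mono) auto
    ultimately have tpi: "t \<le> pi/2" by linarith
    have st: "\<bar>sin (pi * real n * \<delta>)\<bar> = sin t"
    proof -
      have "\<bar>sin (pi * real n * \<delta>)\<bar> = \<bar>sin t\<bar>"
        unfolding t_def by (cases "\<delta> \<ge> 0") (auto simp: abs_if)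
      also have "\<bar>sin t\<bar> = sin t" using t0 tpi by (intro abs_of_nonneg sin_ge_zero) auto
      finally show ?thesis .
    qed
    have sd: "\<bar>sin (pi * \<delta>)\<bar> \<le> pi * \<bar>\<delta>\<bar>" using abs_sin_x_le_abs_x[of "pi*\<delta>"] by (simp add: abs_mult)
    have sdpos: "\<bar>sin (pi * \<delta>)\<bar> \<ge> 0" by simp
    have eq: "cmod (Kf m n \<delta>) * real m * \<bar>sin (pi*\<delta>)\<bar> = sin t" using K_geom[of m n \<delta>] assms st by simp
    have "sin t \<ge> t * (1 - t^2/6)" using sin_cubic[of t] t0 by (simp add: algebra_simps power3_eq_cube power2_eq_square)
    hence "cmod (Kf m n \<delta>) * real m * (pi * \<bar>\<delta>\<bar>) \<ge> t * (1 - t^2/6)"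
    proof -
      have "cmod (Kf m n \<delta>) * real m * \<bar>sin (pi*\<delta>)\<bar> \<le> cmod (Kf m n \<delta>) * real m * (pi * \<bar>\<delta>\<bar>)"
        using m0 by (intro mult_left_mono[OF sd]) simp
      thus ?thesis using eq \<open>sin t \<ge> t * (1 - t^2/6)\<close> by linarith
    qed
    hence "cmod (Kf m n \<delta>) * real m * (pi * \<bar>\<delta>\<bar>) \<ge> pi * \<bar>\<delta>\<bar> * (real n * (1 - t^2/6))"
      unfolding t_def by (simp add: algebra_simps)
    hence k1: "cmod (Kf m n \<delta>) * real m \<ge> real n * (1 - t^2/6)"
      using False by (simp add: mult.commute mult_le_cancel_left_pos)
    have "t^2 \<le> (pi*u/2)^2" using t0 tle by (intro power_mono) auto
    also have "\<dots> = pi^2 * u^2 / 4" by (simp add: power_mult_distrib power_divide)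
    also have "\<dots> \<le> 10 * u^2 / 4"
    proof -
      have "pi * pi \<le> 3.15 * 3.15" using pi_approx(2) by (intro mult_mono) auto
      hence "pi^2 \<le> 10" by (simp add: power2_eq_square)
      hence "pi^2 * u^2 \<le> 10 * u^2" by (intro mult_right_mono) auto
      thus ?thesis by simp
    qed
    finally have t2: "t^2 \<le> 10/4 * u^2" by simp
    have "cmod (Kf m n \<delta>) \<ge> u * (1 - t^2/6)"
    proof -
      have "u * (1 - t^2/6) = (real n * (1 - t^2/6)) / real m" unfolding u_def by simp
      also have "\<dots> \<le> (cmod (Kf m n \<delta>) * real m) / real m" using k1 m0 by (intro divide_right_mono) auto
      also have "\<dots> = cmod (Kf m n \<delta>)" using m0 by simp
      finally show ?thesis .
    qed
    moreover have "u * (1 - t^2/6) \<ge> u * (1 - 5/12 * u^2)" using t2 u1 by (intro mult_left_mono) auto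
    moreover have "u * (1 - 5/12 * u^2) \<ge> 11/25"
    proof -
      define v where "v = u - 1/2"
      have v: "0 \<le> v" "v \<le> 1/2" using u1 unfolding v_def by auto
      have v2: "v^2 \<le> v/2"
      proof -
        have "v * v \<le> v * (1/2)" using v by (intro mult_left_mono) auto
        thus ?thesis by (simp add: power2_eq_square)
      qed
      moreover have "v^3 \<le> v/4"
      proof -
        have "v * v^2 \<le> v * (v/2)" using v v2 by (intro mult_left_mono) auto
        thus ?thesis using v2 by (simp add: power3_eq_cube power2_eq_square)
      qed
      moreover have "u * (1 - 5/12 * u^2) = 1/2 - 5/96 + v * (11/16) - (5/8)* v^2 - (5/12)* v^3"
        unfolding v_def power2_eq_square power3_eq_cube by (simp add: field_simps)
      ultimately show ?thesis using v by linarith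
    qed
    ultimately show ?thesis by linarith
  qed
qed

lemma K_other:
  assumes "1 \<le> k" "k < n" "n \<le> m" "\<bar>\<delta>\<bar> \<le> 1/(2*real m)"
  shows "cmod (Kf m n (real k/real n + \<delta>)) \<le> 1 / real (min k (n-k))"
proof -
  define s where "s = real k/real n + \<delta>"
  define d where "d = real (min k (n-k))"
  have n0: "real n > 0" using assms by simp
  have m0: "real m > 0" using assms by simp
  have d1: "d \<ge> 1" using assms unfolding d_def by auto
  have dk: "d \<le> real k" "d \<le> real n - real k" using assms unfolding d_def by auto
  have "1/(2*real m) \<le> 1/(2*real n)" using assms n0 by (intro divide_left_mono) auto
  hence dd: "\<bar>\<delta>\<bar> \<le> 1/(2*real n)" using assms by linarith
  have "2 * s \<ge> d / real n"
  proof -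
    have "2 * s \<ge> 2*real k/real n - 1/real n" unfolding s_def using dd by (simp add: field_simps abs_le_iff)
    also have "2*real k/real n - 1/real n = (2*real k - 1)/real n" by (simp add: diff_divide_distrib)
    also have "(2*real k - 1)/real n \<ge> d / real n" using dk assms n0 by (intro divide_right_mono) auto
    finally show ?thesis .
  qed
  moreover have "2 * (1 - s) \<ge> d / real n"
  proof -
    have "2*(1-s) \<ge> 2*(real n - real k)/real n - 1/real n" unfolding s_def using dd n0 by (simp add: field_simps abs_le_iff)
    also have "2*(real n - real k)/real n - 1/real n = (2*(real n - real k) - 1)/real n" by (simp add: diff_divide_distrib)
    also have "(2*(real n - real k) - 1)/real n \<ge> d / real n" using dk d1 n0 by (intro divide_right_mono) auto
    finally show ?thesis .
  qed
  ultimately have mn: "2 * min s (1 - s) \<ge> d / real n" by (simp add: min_def)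
  have dpos: "d / real n > 0" using d1 n0 by simp
  have s01: "0 \<le> s" "s \<le> 1" using mn dpos by (auto simp: min_def split: if_splits)
  have sinb: "\<bar>sin (pi * s)\<bar> \<ge> d / real n" using jordan[OF s01] mn by linarith
  have eq: "cmod (Kf m n s) * real m * \<bar>sin (pi * s)\<bar> = \<bar>sin (pi * real n * s)\<bar>" using K_geom m0 by simp
  have "cmod (Kf m n s) * real m * (d / real n) \<le> cmod (Kf m n s) * real m * \<bar>sin (pi * s)\<bar>"
    using sinb m0 by (intro mult_left_mono) auto
  also have "\<dots> \<le> 1" using eq by simp
  finally have k1: "cmod (Kf m n s) * (real m * d / real n) \<le> 1" by simp
  have "real m * d / real n \<ge> d" using assms d1 n0 by (simp add: field_simps mult_right_mono)
  hence "cmod (Kf m n s) * d \<le> cmod (Kf m n s) * (real m * d / real n)" by (intro mult_left_mono) auto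
  hence "cmod (Kf m n s) * d \<le> 1" using k1 by linarith
  hence "cmod (Kf m n s) \<le> 1 / d" using d1 by (simp add: field_simps)
  thus ?thesis unfolding s_def d_def .
qed

lemma circ_abs_le: "circ_abs k x \<le> \<bar>x - real k * of_int z\<bar>"
  unfolding circ_abs_def
  by (rule cInf_lower) (auto intro!: bdd_belowI[of _ 0])

lemma ln2_le: "ln (2::real) \<le> 0.9"
proof -
  have "exp (0.45::real) \<ge> 1.45" using exp_ge_add_one_self[of "0.45::real"] by simp
  hence "exp (0.45::real) * exp 0.45 \<ge> 1.45 * 1.45" by (intro mult_mono) auto
  hence "exp (0.9::real) \<ge> 2" by (simp add: exp_add[symmetric])
  hence "ln 2 \<le> ln (exp (0.9::real))" by (subst ln_le_cancel_iff) auto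
  thus ?thesis by simp
qed

lemma sep_image:
  fixes h :: "'a \<Rightarrow> real"
  assumes "r > 0" "finite A" "\<forall>\<beta>\<in>A. h \<beta> > r" "\<forall>\<beta>\<in>A. \<forall>\<beta>'\<in>A. \<beta> \<noteq> \<beta>' \<longrightarrow> \<bar>h \<beta> - h \<beta>'\<bar> > r"
  shows "(\<Sum>\<beta>\<in>A. 1 / h \<beta>) \<le> HH (card A) / r"
proof -
  have inj: "inj_on h A"
  proof (rule inj_onI)
    fix x y assume "x \<in> A" "y \<in> A" "h x = h y"
    thus "x = y" using assms(1,4) by force
  qed
  have "(\<Sum>\<beta>\<in>A. 1 / h \<beta>) = (\<Sum>s\<in>h ` A. 1 / s)" by (simp add: sum.reindex[OF inj])
  also have "\<dots> \<le> HH (card (h ` A)) / r"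
    by (rule sep_sum) (use assms in auto)
  also have "card (h ` A) = card A" by (rule card_image[OF inj])
  finally show ?thesis .
qed

definition kk :: "nat \<Rightarrow> nat \<Rightarrow> nat \<Rightarrow> nat" where
  "kk n \<alpha> \<beta> = nat ((int \<beta> - int \<alpha>) mod int n)"

lemma kk_decomp:
  assumes "0 < n"
  shows "real (kk n \<alpha> \<beta>) = real \<beta> - real \<alpha> - real n * of_int ((int \<beta> - int \<alpha>) div int n)"
proof -
  have "(int \<beta> - int \<alpha>) mod int n \<ge> 0" using assms by simp
  hence "int (kk n \<alpha> \<beta>) = (int \<beta> - int \<alpha>) mod int n" unfolding kk_def by simp
  also have "\<dots> = (int \<beta> - int \<alpha>) - int n * ((int \<beta> - int \<alpha>) div int n)"
    by (simp add: minus_div_mult_eq_mod[symmetric] mult.commute)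
  finally have "real_of_int (int (kk n \<alpha> \<beta>)) = real_of_int ((int \<beta> - int \<alpha>) - int n * ((int \<beta> - int \<alpha>) div int n))"
    by simp
  thus ?thesis by simp
qed

lemma kk_range:
  assumes "\<alpha> < n" "\<beta> < n" "\<beta> \<noteq> \<alpha>"
  shows "1 \<le> kk n \<alpha> \<beta>" "kk n \<alpha> \<beta> < n"
proof -
  have n0: "0 < int n" using assms by simp
  show "kk n \<alpha> \<beta> < n" unfolding kk_def using n0
    by (metis nat_less_iff of_nat_0_le_iff pos_mod_bound pos_mod_sign)
  show "1 \<le> kk n \<alpha> \<beta>"
  proof (rule ccontr)
    assume "\<not> 1 \<le> kk n \<alpha> \<beta>"
    hence "(int \<beta> - int \<alpha>) mod int n = 0" unfolding kk_def using n0
      using pos_mod_sign[of "int n" "int \<beta> - int \<alpha>"] by linarith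
    hence "int n dvd (int \<beta> - int \<alpha>)" by (simp add: dvd_eq_mod_eq_0)
    moreover have "int \<beta> - int \<alpha> \<noteq> 0" using assms by simp
    ultimately have "\<bar>int n\<bar> \<le> \<bar>int \<beta> - int \<alpha>\<bar>" by (rule dvd_imp_le_int[rotated])
    thus False using assms by auto
  qed
qed

definition ww :: "nat \<Rightarrow> nat \<Rightarrow> nat \<Rightarrow> real" where
  "ww n \<alpha> \<beta> = 1 / real (min (kk n \<alpha> \<beta>) (n - kk n \<alpha> \<beta>))"

lemma kk_inj: "inj_on (kk n \<alpha>) {..<n}"
proof (rule inj_onI)
  fix x y assume xy: "x \<in> {..<n}" "y \<in> {..<n}" "kk n \<alpha> x = kk n \<alpha> y"
  hence n0: "0 < int n" by auto
  have "(int x - int \<alpha>) mod int n = (int y - int \<alpha>) mod int n"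
    using xy(3) n0 unfolding kk_def by (simp add: nat_eq_iff2)
  hence "int n dvd (int x - int \<alpha>) - (int y - int \<alpha>)" by (simp add: mod_eq_dvd_iff)
  hence d: "int n dvd (int x - int y)" by simp
  show "x = y"
  proof (rule ccontr)
    assume "x \<noteq> y"
    hence "int x - int y \<noteq> 0" by simp
    hence "\<bar>int n\<bar> \<le> \<bar>int x - int y\<bar>" by (rule dvd_imp_le_int) (rule d)
    thus False using xy by auto
  qed
qed

lemma ww_nonneg: "ww n \<alpha> \<beta> \<ge> 0" unfolding ww_def by simp

lemma HH_rev: "(\<Sum>k\<in>{1..N}. 1 / real (Suc N - k)) = HH N"
proof -
  have "(\<Sum>k\<in>{1..N}. 1 / real (Suc N - k)) = (\<Sum>k\<in>{1..N}. 1 / real (Suc N - (N + 1 - k)))"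
    by (subst sum.atLeastAtMost_rev) simp
  also have "\<dots> = (\<Sum>k\<in>{1..N}. 1 / real k)" by (rule sum.cong) auto
  finally show ?thesis unfolding HH_def .
qed

lemma W_all:
  assumes "\<alpha> < n"
  shows "(\<Sum>\<beta>\<in>{..<n}-{\<alpha>}. ww n \<alpha> \<beta>) \<le> 2 + 2 * ln (real n)"
proof -
  define h where "h k = 1 / real k + 1 / real (n - k)" for k
  have "(\<Sum>\<beta>\<in>{..<n}-{\<alpha>}. ww n \<alpha> \<beta>) \<le> (\<Sum>\<beta>\<in>{..<n}-{\<alpha>}. h (kk n \<alpha> \<beta>))"
  proof (rule sum_mono)
    fix \<beta> assume b: "\<beta> \<in> {..<n}-{\<alpha>}"
    have r: "1 \<le> kk n \<alpha> \<beta>" "kk n \<alpha> \<beta> < n" using kk_range[of \<alpha> n \<beta>] assms b by auto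
    show "ww n \<alpha> \<beta> \<le> h (kk n \<alpha> \<beta>)"
      unfolding ww_def h_def using r by (auto simp: min_def)
  qed
  also have "\<dots> = (\<Sum>k\<in>kk n \<alpha> ` ({..<n}-{\<alpha>}). h k)"
    by (subst sum.reindex) (auto intro: inj_on_subset[OF kk_inj])
  also have "\<dots> \<le> (\<Sum>k\<in>{1..n-1}. h k)"
  proof (rule sum_mono2)
    show "kk n \<alpha> ` ({..<n}-{\<alpha>}) \<subseteq> {1..n-1}" using kk_range[of \<alpha> n] assms by force
    show "\<And>b. b \<in> {1..n - 1} - kk n \<alpha> ` ({..<n} - {\<alpha>}) \<Longrightarrow> 0 \<le> h b" unfolding h_def by auto
  qed simp
  also have "\<dots> = HH (n-1) + HH (n-1)"
  proof -
    have "(\<Sum>k\<in>{1..n-1}. h k) = HH (n-1) + (\<Sum>k\<in>{1..n-1}. 1 / real (n - k))"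
      unfolding h_def HH_def by (simp add: sum.distrib)
    also have "(\<Sum>k\<in>{1..n-1}. 1 / real (n - k)) = HH (n-1)"
      using HH_rev[of "n-1"] assms by simp
    finally show ?thesis .
  qed
  also have "\<dots> \<le> 2 + 2 * ln (real n)"
  proof (cases "n - 1 \<ge> 1")
    case True
    have "HH (n-1) \<le> 1 + ln (real (n-1))" by (rule HH_le[OF True])
    also have "ln (real (n-1)) \<le> ln (real n)" using True by (subst ln_le_cancel_iff) auto
    finally show ?thesis by simp
  next
    case False
    hence "n - 1 = 0" by simp
    moreover have "ln (real n) \<ge> 0" using assms by simp
    ultimately show ?thesis by (simp add: HH_def)
  qed
  finally show ?thesis .
qed

lemma W_Gamma:
  assumes a: "\<alpha> \<in> \<Gamma>" and G: "\<Gamma> \<subseteq> {0..<n}" and r: "r > 0"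
    and sep: "\<forall>a\<in>\<Gamma>. \<forall>a'\<in>\<Gamma>. a \<noteq> a' \<longrightarrow> circ_abs n (real a - real a') > r"
  shows "(\<Sum>\<beta>\<in>\<Gamma>-{\<alpha>}. ww n \<alpha> \<beta>) \<le> 2 * HH (card \<Gamma>) / r"
proof -
  have n0: "0 < n" using a G by auto
  have finG: "finite \<Gamma>" using G finite_subset by blast
  define z where "z \<beta> = (int \<beta> - int \<alpha>) div int n" for \<beta>
  have kd: "real (kk n \<alpha> \<beta>) = real \<beta> - real \<alpha> - real n * of_int (z \<beta>)" for \<beta>
    using kk_decomp[OF n0] unfolding z_def by simp
  have rng: "1 \<le> kk n \<alpha> \<beta> \<and> kk n \<alpha> \<beta> < n" if "\<beta> \<in> \<Gamma>" "\<beta> \<noteq> \<alpha>" for \<beta>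
  proof -
    have "\<alpha> < n" "\<beta> < n" using that a G by auto
    thus ?thesis using kk_range[of \<alpha> n \<beta>] that by auto
  qed
  define A where "A = {\<beta>\<in>\<Gamma>-{\<alpha>}. kk n \<alpha> \<beta> \<le> n - kk n \<alpha> \<beta>}"
  define B where "B = (\<Gamma>-{\<alpha>}) - A"
  have finA: "finite A" "finite B" unfolding A_def B_def using finG by auto
  have AB: "A \<subseteq> \<Gamma>-{\<alpha>}" unfolding A_def by auto
  have "(\<Sum>\<beta>\<in>\<Gamma>-{\<alpha>}. ww n \<alpha> \<beta>) = (\<Sum>\<beta>\<in>B. ww n \<alpha> \<beta>) + (\<Sum>\<beta>\<in>A. ww n \<alpha> \<beta>)"
    unfolding B_def by (rule sum.subset_diff[OF AB]) (use finG in auto)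
  also have "(\<Sum>\<beta>\<in>A. ww n \<alpha> \<beta>) = (\<Sum>\<beta>\<in>A. 1 / real (kk n \<alpha> \<beta>))"
    by (rule sum.cong) (auto simp: ww_def A_def min_def)
  also have "(\<Sum>\<beta>\<in>B. ww n \<alpha> \<beta>) = (\<Sum>\<beta>\<in>B. 1 / (real n - real (kk n \<alpha> \<beta>)))"
  proof (rule sum.cong)
    fix \<beta> assume "\<beta> \<in> B"
    hence "\<beta> \<in> \<Gamma>" "\<beta> \<noteq> \<alpha>" "\<not> kk n \<alpha> \<beta> \<le> n - kk n \<alpha> \<beta>" unfolding B_def A_def by auto
    moreover have "kk n \<alpha> \<beta> < n" using rng calculation by auto
    ultimately show "ww n \<alpha> \<beta> = 1 / (real n - real (kk n \<alpha> \<beta>))" by (simp add: ww_def min_def of_nat_diff)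
  qed simp
  finally have eq: "(\<Sum>\<beta>\<in>\<Gamma>-{\<alpha>}. ww n \<alpha> \<beta>) = (\<Sum>\<beta>\<in>B. 1 / (real n - real (kk n \<alpha> \<beta>))) + (\<Sum>\<beta>\<in>A. 1 / real (kk n \<alpha> \<beta>))" .
  have ha: "(\<Sum>\<beta>\<in>A. 1 / real (kk n \<alpha> \<beta>)) \<le> HH (card A) / r"
  proof (rule sep_image[OF r finA(1)])
    show "\<forall>\<beta>\<in>A. r < real (kk n \<alpha> \<beta>)"
    proof
      fix \<beta> assume b: "\<beta> \<in> A"
      hence b': "\<beta> \<in> \<Gamma>" "\<alpha> \<noteq> \<beta>" unfolding A_def by auto
      have "r < circ_abs n (real \<alpha> - real \<beta>)" using sep a b' by auto
      also have "\<dots> \<le> \<bar>(real \<alpha> - real \<beta>) - real n * of_int (- z \<beta>)\<bar>" by (rule circ_abs_le)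
      also have "\<dots> = real (kk n \<alpha> \<beta>)"
      proof -
        have "(real \<alpha> - real \<beta>) - real n * of_int (- z \<beta>) = - real (kk n \<alpha> \<beta>)" unfolding kd by simp
        thus ?thesis by simp
      qed
      finally show "r < real (kk n \<alpha> \<beta>)" .
    qed
    show "\<forall>\<beta>\<in>A. \<forall>\<beta>'\<in>A. \<beta> \<noteq> \<beta>' \<longrightarrow> r < \<bar>real (kk n \<alpha> \<beta>) - real (kk n \<alpha> \<beta>')\<bar>"
    proof (intro ballI impI)
      fix \<beta> \<beta>' assume b: "\<beta> \<in> A" "\<beta>' \<in> A" "\<beta> \<noteq> \<beta>'"
      hence b': "\<beta> \<in> \<Gamma>" "\<beta>' \<in> \<Gamma>" unfolding A_def by auto
      have "r < circ_abs n (real \<beta> - real \<beta>')" using sep b b' by auto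
      also have "\<dots> \<le> \<bar>(real \<beta> - real \<beta>') - real n * of_int (z \<beta> - z \<beta>')\<bar>" by (rule circ_abs_le)
      also have "\<dots> = \<bar>real (kk n \<alpha> \<beta>) - real (kk n \<alpha> \<beta>')\<bar>" unfolding kd by (simp add: algebra_simps)
      finally show "r < \<bar>real (kk n \<alpha> \<beta>) - real (kk n \<alpha> \<beta>')\<bar>" .
    qed
  qed
  have hb: "(\<Sum>\<beta>\<in>B. 1 / (real n - real (kk n \<alpha> \<beta>))) \<le> HH (card B) / r"
  proof (rule sep_image[OF r finA(2)])
    show "\<forall>\<beta>\<in>B. r < real n - real (kk n \<alpha> \<beta>)"
    proof
      fix \<beta> assume b: "\<beta> \<in> B"
      hence b': "\<beta> \<in> \<Gamma>" "\<alpha> \<noteq> \<beta>" unfolding B_def by auto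
      have "r < circ_abs n (real \<alpha> - real \<beta>)" using sep a b' by auto
      also have "\<dots> \<le> \<bar>(real \<alpha> - real \<beta>) - real n * of_int (- z \<beta> - 1)\<bar>" by (rule circ_abs_le)
      also have "\<dots> = \<bar>real n - real (kk n \<alpha> \<beta>)\<bar>" unfolding kd by (simp add: algebra_simps)
      also have "\<dots> = real n - real (kk n \<alpha> \<beta>)" using rng[of \<beta>] b' by auto
      finally show "r < real n - real (kk n \<alpha> \<beta>)" .
    qed
    show "\<forall>\<beta>\<in>B. \<forall>\<beta>'\<in>B. \<beta> \<noteq> \<beta>' \<longrightarrow> r < \<bar>(real n - real (kk n \<alpha> \<beta>)) - (real n - real (kk n \<alpha> \<beta>'))\<bar>"
    proof (intro ballI impI)
      fix \<beta> \<beta>' assume b: "\<beta> \<in> B" "\<beta>' \<in> B" "\<beta> \<noteq> \<beta>'"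
      hence b': "\<beta> \<in> \<Gamma>" "\<beta>' \<in> \<Gamma>" unfolding B_def by auto
      have "r < circ_abs n (real \<beta>' - real \<beta>)" using sep b b' by auto
      also have "\<dots> \<le> \<bar>(real \<beta>' - real \<beta>) - real n * of_int (z \<beta>' - z \<beta>)\<bar>" by (rule circ_abs_le)
      also have "\<dots> = \<bar>(real n - real (kk n \<alpha> \<beta>)) - (real n - real (kk n \<alpha> \<beta>'))\<bar>" unfolding kd by (simp add: algebra_simps)
      finally show "r < \<bar>(real n - real (kk n \<alpha> \<beta>)) - (real n - real (kk n \<alpha> \<beta>'))\<bar>" .
    qed
  qed
  have hc: "HH (card B) / r + HH (card A) / r \<le> 2 * HH (card \<Gamma>) / r"
  proof -
    have "card A \<le> card \<Gamma>" "card B \<le> card \<Gamma>" unfolding A_def B_def using finG by (auto intro: card_mono)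
    hence "HH (card A) \<le> HH (card \<Gamma>)" "HH (card B) \<le> HH (card \<Gamma>)" by (auto intro: HH_mono)
    hence "HH (card B) + HH (card A) \<le> 2 * HH (card \<Gamma>)" by linarith
    hence "(HH (card B) + HH (card A)) / r \<le> 2 * HH (card \<Gamma>) / r" using r by (intro divide_right_mono) auto
    thus ?thesis by (simp add: add_divide_distrib)
  qed
  show ?thesis using eq ha hb hc by linarith
qed

theorem proposition5p3:
  fixes m n :: nat and L C r \<tau> :: real and \<Gamma> :: "nat set" and f :: "nat \<Rightarrow> complex"
  assumes "n \<le> m" "m \<le> 2 * n"
    and "L > 0" "C > 1"
    and "\<Gamma> \<subseteq> {0..<n}"
    and "r = 20 * C * (ln (real (card \<Gamma>) / 2) + 1)"
    and "\<tau> < L / 20 * (1 / (3 + 2 * ln (real n)))"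
    and "\<forall>\<alpha>\<in>\<Gamma>. \<forall>\<alpha>'\<in>\<Gamma>. \<alpha> \<noteq> \<alpha>' \<longrightarrow> circ_abs n (real \<alpha> - real \<alpha>') > r"
    and "\<forall>\<alpha>\<in>\<Gamma>. L \<le> cmod (dft n f \<alpha>) \<and> cmod (dft n f \<alpha>) \<le> C * L"
    and "\<forall>\<alpha>\<in>{0..<n} - \<Gamma>. cmod (dft n f \<alpha>) \<le> \<tau>"
  shows "\<forall>\<alpha>\<in>\<Gamma>. cmod (dft m (ext_fun n m f) (round_mod m (real m / real n * real \<alpha>))) \<ge> L / 5"
proof
  fix \<alpha> assume aG: "\<alpha> \<in> \<Gamma>"
  have an: "\<alpha> < n" using aG assms(5) by auto
  hence n0: "0 < n" by simp
  have m0: "0 < m" using n0 assms(1) by simp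
  have finG: "finite \<Gamma>" using assms(5) finite_subset by blast
  have G1: "card \<Gamma> \<ge> 1" using aG finG by (metis One_nat_def Suc_leI card_gt_0_iff empty_iff)
  define g where "g = round (real m / real n * real \<alpha>)"
  define q where "q = g div int m"
  define \<gamma> where "\<gamma> = round_mod m (real m / real n * real \<alpha>)"
  have \<gamma>eq: "real \<gamma> = of_int g - real m * of_int q"
  proof -
    have "g mod int m \<ge> 0" using m0 by simp
    hence "int \<gamma> = g mod int m" unfolding \<gamma>_def round_mod_def g_def by simp
    also have "\<dots> = g - int m * q" unfolding q_def by (simp add: minus_div_mult_eq_mod[symmetric] mult.commute)
    finally have "real_of_int (int \<gamma>) = real_of_int (g - int m * q)" by simp
    thus ?thesis by simp
  qed
  define \<delta> where "\<delta> = real \<alpha> / real n - of_int g / real m"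
  have \<delta>b: "\<bar>\<delta>\<bar> \<le> 1/(2*real m)"
  proof -
    have "\<bar>of_int g - real m / real n * real \<alpha>\<bar> \<le> 1/2" unfolding g_def by (rule of_int_round_abs_le)
    moreover have "\<delta> * real m = - (of_int g - real m / real n * real \<alpha>)" unfolding \<delta>_def using m0 n0 by (simp add: field_simps)
    ultimately have "\<bar>\<delta> * real m\<bar> \<le> 1/2" by (simp only: abs_minus_cancel)
    hence "\<bar>\<delta>\<bar> * real m \<le> 1/2" by (simp add: abs_mult)
    thus ?thesis using m0 by (simp add: field_simps)
  qed
  define F where "F = dft n f"
  define K where "K \<beta> = Kf m n (real (kk n \<alpha> \<beta>) / real n + \<delta>)" for \<beta>
  have Keq: "Kf m n (real \<beta>/real n - real \<gamma>/real m) = K \<beta>" for \<beta>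
  proof -
    define z where "z = (int \<beta> - int \<alpha>) div int n"
    have kd: "real (kk n \<alpha> \<beta>) = real \<beta> - real \<alpha> - real n * of_int z"
      using kk_decomp[OF n0] unfolding z_def by simp
    have "real \<beta>/real n - real \<gamma>/real m = (real (kk n \<alpha> \<beta>) / real n + \<delta>) + of_int (z + q)"
      unfolding kd \<gamma>eq \<delta>_def using m0 n0 by (simp add: field_simps)
    thus ?thesis unfolding K_def by (simp only: K_shift)
  qed
  have dexp: "dft m (ext_fun n m f) \<gamma> = (\<Sum>\<beta><n. F \<beta> * K \<beta>)"
    unfolding dft_ext_expand[OF n0 assms(1)] F_def Keq[symmetric] Kf_def ..
  have Ka: "cmod (K \<alpha>) \<ge> 11/25"
  proof -
    have "kk n \<alpha> \<alpha> = 0" unfolding kk_def by simp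
    hence "K \<alpha> = Kf m n \<delta>" unfolding K_def by simp
    thus ?thesis using K_main[OF n0 assms(1) assms(2) \<delta>b] by simp
  qed
  have Kb: "cmod (K \<beta>) \<le> ww n \<alpha> \<beta>" if "\<beta> < n" "\<beta> \<noteq> \<alpha>" for \<beta>
    unfolding K_def ww_def using kk_range[OF an that] by (intro K_other[OF _ _ assms(1) \<delta>b]) auto
  have Fa: "cmod (F \<alpha>) \<ge> L" using assms(9) aG unfolding F_def by auto
  define R where "R = {..<n} - {\<alpha>}"
  have e: "(\<Sum>\<beta><n. F \<beta> * K \<beta>) = F \<alpha> * K \<alpha> + (\<Sum>\<beta>\<in>R. F \<beta> * K \<beta>)"
    unfolding R_def using an by (subst sum.remove[of _ \<alpha>]) auto
  have low: "cmod (dft m (ext_fun n m f) \<gamma>) \<ge> cmod (F \<alpha>) * cmod (K \<alpha>) - (\<Sum>\<beta>\<in>R. cmod (F \<beta>) * ww n \<alpha> \<beta>)"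
  proof -
    have "cmod (\<Sum>\<beta>\<in>R. F \<beta> * K \<beta>) \<le> (\<Sum>\<beta>\<in>R. cmod (F \<beta> * K \<beta>))" by (rule norm_sum)
    also have "\<dots> \<le> (\<Sum>\<beta>\<in>R. cmod (F \<beta>) * ww n \<alpha> \<beta>)"
      unfolding norm_mult R_def by (intro sum_mono mult_left_mono Kb) auto
    finally have "cmod (\<Sum>\<beta>\<in>R. F \<beta> * K \<beta>) \<le> (\<Sum>\<beta>\<in>R. cmod (F \<beta>) * ww n \<alpha> \<beta>)" .
    moreover have "cmod (F \<alpha> * K \<alpha>) - cmod (\<Sum>\<beta>\<in>R. F \<beta> * K \<beta>) \<le> cmod (F \<alpha> * K \<alpha> + (\<Sum>\<beta>\<in>R. F \<beta> * K \<beta>))"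
      by (metis norm_diff_ineq diff_minus_eq_add norm_minus_cancel)
    ultimately show ?thesis unfolding dexp e norm_mult by linarith
  qed
  have Rsplit: "R = (\<Gamma> - {\<alpha>}) \<union> ({0..<n} - \<Gamma>)" unfolding R_def using assms(5) aG by auto
  have wnn: "\<And>\<beta>. ww n \<alpha> \<beta> \<ge> 0" by (rule ww_nonneg)
  define SG where "SG = (\<Sum>\<beta>\<in>\<Gamma>-{\<alpha>}. ww n \<alpha> \<beta>)"
  define tp where "tp = max \<tau> 0"
  have "(\<Sum>\<beta>\<in>R. cmod (F \<beta>) * ww n \<alpha> \<beta>) = (\<Sum>\<beta>\<in>\<Gamma>-{\<alpha>}. cmod (F \<beta>) * ww n \<alpha> \<beta>) + (\<Sum>\<beta>\<in>{0..<n}-\<Gamma>. cmod (F \<beta>) * ww n \<alpha> \<beta>)"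
    unfolding Rsplit by (rule sum.union_disjoint) (use finG in auto)
  moreover have "(\<Sum>\<beta>\<in>\<Gamma>-{\<alpha>}. cmod (F \<beta>) * ww n \<alpha> \<beta>) \<le> C * L * SG"
  proof -
    have "(\<Sum>\<beta>\<in>\<Gamma>-{\<alpha>}. cmod (F \<beta>) * ww n \<alpha> \<beta>) \<le> (\<Sum>\<beta>\<in>\<Gamma>-{\<alpha>}. (C * L) * ww n \<alpha> \<beta>)"
      using assms(9) unfolding F_def by (intro sum_mono mult_right_mono wnn) auto
    thus ?thesis unfolding SG_def by (simp add: sum_distrib_left)
  qed
  moreover have "(\<Sum>\<beta>\<in>{0..<n}-\<Gamma>. cmod (F \<beta>) * ww n \<alpha> \<beta>) \<le> tp * (2 + 2 * ln (real n))"
  proof -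
    have "(\<Sum>\<beta>\<in>{0..<n}-\<Gamma>. cmod (F \<beta>) * ww n \<alpha> \<beta>) \<le> (\<Sum>\<beta>\<in>{0..<n}-\<Gamma>. tp * ww n \<alpha> \<beta>)"
      using assms(10) unfolding F_def tp_def by (intro sum_mono mult_right_mono wnn) (auto simp: le_max_iff_disj)
    also have "\<dots> = tp * (\<Sum>\<beta>\<in>{0..<n}-\<Gamma>. ww n \<alpha> \<beta>)" by (simp add: sum_distrib_left)
    also have "(\<Sum>\<beta>\<in>{0..<n}-\<Gamma>. ww n \<alpha> \<beta>) \<le> (\<Sum>\<beta>\<in>{..<n}-{\<alpha>}. ww n \<alpha> \<beta>)"
      using aG by (intro sum_mono2 wnn) auto
    also have "\<dots> \<le> 2 + 2 * ln (real n)" by (rule W_all[OF an])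
    finally show ?thesis unfolding tp_def by (simp add: mult_left_mono)
  qed
  moreover have "tp * (2 + 2 * ln (real n)) \<le> L / 20"
  proof -
    have ln0: "ln (real n) \<ge> 0" using n0 by simp
    define D where "D = 3 + 2 * ln (real n)"
    have D0: "D > 0" unfolding D_def using ln0 by simp
    have "\<tau> < L / (20 * D)" using assms(7) unfolding D_def by simp
    moreover have "0 < L / (20 * D)" using D0 assms(3) by simp
    ultimately have "tp < L / (20 * D)" unfolding tp_def by simp
    hence "tp * D \<le> L / (20 * D) * D" using D0 by (intro mult_right_mono) auto
    also have "\<dots> = L / 20" using D0 by simp
    finally have "tp * D \<le> L / 20" .
    moreover have "tp * (2 + 2 * ln (real n)) \<le> tp * D" unfolding D_def tp_def by (intro mult_left_mono) auto
    ultimately show ?thesis by linarith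
  qed
  moreover have "C * L * SG \<le> 19/100 * L"
  proof (cases "card \<Gamma> = 1")
    case True
    then obtain x where "\<Gamma> = {x}" by (auto simp: card_1_singleton_iff)
    hence "\<Gamma> - {\<alpha>} = {}" using aG by auto
    hence "SG = 0" unfolding SG_def by (metis sum.empty)
    thus ?thesis using assms(3) by simp
  next
    case False
    hence G2: "card \<Gamma> \<ge> 2" using G1 by simp
    define y where "y = ln (real (card \<Gamma>))"
    have y2: "y \<ge> ln 2" unfolding y_def using G2 by (subst ln_le_cancel_iff) auto
    have l2: "ln (2::real) \<le> 0.9" by (rule ln2_le)
    have req: "r = 20 * C * (y - ln 2 + 1)" unfolding assms(6) y_def using G2 by (simp add: ln_div)
    have r0: "r > 0" unfolding req using assms(4) y2 l2 by (intro mult_pos_pos) auto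
    have "SG \<le> 2 * HH (card \<Gamma>) / r" unfolding SG_def by (rule W_Gamma[OF aG assms(5) r0 assms(8)])
    also have "\<dots> \<le> 2 * (1 + y) / r" unfolding y_def using HH_le[OF G1] r0 by (intro divide_right_mono) auto
    finally have sg: "SG \<le> 2 * (1 + y) / r" .
    have "200 * (1 + y) \<le> 380 * (y - ln 2 + 1)"
    proof -
      have "180 * y \<ge> 180 * ln 2" using y2 by simp
      moreover have "200 * ln (2::real) \<le> 180" using l2 by simp
      ultimately show ?thesis by (simp add: algebra_simps)
    qed
    hence "C * (200 * (1 + y)) \<le> C * (380 * (y - ln 2 + 1))" using assms(4) by (intro mult_left_mono) auto
    hence "C * (2 * (1 + y)) \<le> 19/100 * r" unfolding req by (simp add: algebra_simps)
    hence "C * (2 * (1 + y) / r) \<le> 19/100" using r0 by (simp add: field_simps)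
    moreover have "C * SG \<le> C * (2 * (1 + y) / r)" using sg assms(4) by (intro mult_left_mono) auto
    ultimately have "C * SG \<le> 19/100" by linarith
    hence "L * (C * SG) \<le> L * (19/100)" using assms(3) by (intro mult_left_mono) auto
    thus ?thesis by (simp add: mult_ac)
  qed
  moreover have "cmod (F \<alpha>) * cmod (K \<alpha>) \<ge> L * (11/25)"
    using Fa Ka assms(3) by (intro mult_mono) auto
  ultimately have "cmod (dft m (ext_fun n m f) \<gamma>) \<ge> L / 5" using low by linarith
  thus "cmod (dft m (ext_fun n m f) (round_mod m (real m / real n * real \<alpha>))) \<ge> L / 5" unfolding \<gamma>_def .
qed

end
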